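(* For any irrevocable (non-wasteful) distribution policy $\varphi$, when the characteristic functions range over $V_{\ge3}$, the competitive ratio of $\varphi$ with respect to greedy players is at most $\frac{3\mathsf{min}}{\mathsf{max}}$.
   Context: Players: a finite set $N=\{a_1,\dots,a_n\}$. A characteristic function is $v:2^N\to\mathbb{R}_{\ge 0}$ with $v(\emptyset)=0$. There are fixed, known constants $0<\mathsf{min}\le\mathsf{max}$ and every $v$ considered is monotone and bounded: $\mathsf{min}\le v(S)\le v(T)\le\mathsf{max}$ for all nonempty $S\subseteq T\subseteq N$. For an integer $\delta\ge1$, $V_\delta$ denotes the set of such $v$ with $\delta\cdot\mathsf{min}\le\mathsf{max}<(\delta+1)\cdot\mathsf{min}$, and $V_{\ge3}=\bigcup_{\delta\ge3}V_\delta$. A coalition structure is a partition $C$ of $N$; its social welfare is $\mathsf{SW}(C\mid v)=\sum_{S\in C}v(S)$. Online process: an arrival order is a permutation $\pi=(\pi_1,\dots,\pi_n)$ of $N$; player $\pi_t$ arrives at time $t$. For $S\subseteq N$, $\pi_{|S}$ denotes the players of $S$ in the relative order of $\pi$; $\pi_{|S}$ is a prefix of $\pi_{|T}$ if $S\subseteq T$ and the players of $S$ are the first $|S|$ players of $\pi_{|T}$. Let $C^{t-1}$ be the coalition structure of players arrived before time $t$ ($C^0=\emptyset$). At time $t$, player $\pi_t$ either joins an existing coalition $S\in C^{t-1}$ or forms $\{\pi_t\}$ (choice $S=\emptyset$); decisions are never revised. A distribution policy $\varphi$ assigns to every $S\subseteq N$ and order $\pi_{|S}$ a vector $(\varphi_i(S,\pi_{|S}\mid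 v))_{i\in S}$ with $\sum_{i\in S}\varphi_i(S,\pi_{|S})=v(S)$ (non-wasteful). It is irrevocable if for every $\pi$, every $S\subseteq T\subseteq N$ with $\pi_{|S}$ a prefix of $\pi_{|T}$ and every $i\in S$, $\varphi_i(S,\pi_{|S})\le\varphi_i(T,\pi_{|T})$. Greedy players: $\pi_t$ chooses $S^*\in\arg\max_{S\in C^{t-1}\cup\{\emptyset\}}\varphi_{\pi_t}(S\cup\{\pi_t\},\pi_{|S\cup\{\pi_t\}})$ (predetermined tie-breaking). $C_g(v,\pi\mid\varphi)$ is the final structure. The competitive ratio over a class of characteristic functions is $\alpha=\inf_{v,\pi}\mathsf{SW}(C_g(v,\pi\mid\varphi))/\max_C\mathsf{SW}(C\mid v)$, over $v$ in the class (and any number of players) and all arrival orders $\pi$. *)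

theory Defs
  imports Complex_Main "HOL-Library.Disjoint_Sets"
begin

text \<open>Players are natural numbers; a game is a finite set N of players and a
characteristic function v on subsets of N.  The constants mn and mx are the fixed
bounds min and max.\<close>

definition bounded_monotone :: "real \<Rightarrow> real \<Rightarrow> nat set \<Rightarrow> (nat set \<Rightarrow> real) \<Rightarrow> bool" where
  "bounded_monotone mn mx N v \<longleftrightarrow>
     v {} = 0 \<and>
     (\<forall>S \<subseteq> N. v S \<ge> 0) \<and>
     (\<forall>S T. S \<noteq> {} \<and> S \<subseteq> T \<and> T \<subseteq> N \<longrightarrow> mn \<le> v S \<and> v S \<le> v T \<and> v T \<le> mx)"

definition in_V :: "nat \<Rightarrow> real \<Rightarrow> real \<Rightarrow> nat set \<Rightarrow> (nat set \<Rightarrow> real) \<Rightarrow> bool" where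
  "in_V \<delta> mn mx N v \<longleftrightarrow> bounded_monotone mn mx N v \<and>
     real \<delta> * mn \<le> mx \<and> mx < (real \<delta> + 1) * mn"

definition in_V_ge3 :: "real \<Rightarrow> real \<Rightarrow> nat set \<Rightarrow> (nat set \<Rightarrow> real) \<Rightarrow> bool" where
  "in_V_ge3 mn mx N v \<longleftrightarrow> (\<exists>\<delta>\<ge>3. in_V \<delta> mn mx N v)"

definition arrival_order :: "nat set \<Rightarrow> nat list \<Rightarrow> bool" where
  "arrival_order N \<pi> \<longleftrightarrow> distinct \<pi> \<and> set \<pi> = N"

text \<open>A distribution policy: phi N v sigma i is the share of player i in coalition
set sigma, where the distinct list sigma is the order pi restricted to that coalition.\<close>
type_synonym policy = "nat set \<Rightarrow> (nat set \<Rightarrow> real) \<Rightarrow> nat list \<Rightarrow> nat \<Rightarrow> real"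

definition non_wasteful :: "real \<Rightarrow> real \<Rightarrow> policy \<Rightarrow> bool" where
  "non_wasteful mn mx \<phi> \<longleftrightarrow>
     (\<forall>N v \<sigma>. finite N \<and> in_V_ge3 mn mx N v \<and> distinct \<sigma> \<and> set \<sigma> \<subseteq> N \<longrightarrow>
        (\<Sum>i\<in>set \<sigma>. \<phi> N v \<sigma> i) = v (set \<sigma>))"

definition irrevocable :: "real \<Rightarrow> real \<Rightarrow> policy \<Rightarrow> bool" where
  "irrevocable mn mx \<phi> \<longleftrightarrow>
     (\<forall>N v \<sigma> \<rho> i. finite N \<and> in_V_ge3 mn mx N v \<and> distinct (\<sigma> @ \<rho>) \<and> set (\<sigma> @ \<rho>) \<subseteq> N
        \<and> i \<in> set \<sigma> \<longrightarrow> \<phi> N v \<sigma> i \<le> \<phi> N v (\<sigma> @ \<rho>) i)"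

text \<open>Tie-breaking rule: given N, the arrival prefix (including the arriving player),
the current coalition structure and the set of maximising options, pick one of them.\<close>
type_synonym tiebreak = "nat set \<Rightarrow> nat list \<Rightarrow> nat set set \<Rightarrow> nat set set \<Rightarrow> nat set"

definition valid_tiebreak :: "tiebreak \<Rightarrow> bool" where
  "valid_tiebreak sel \<longleftrightarrow> (\<forall>N p C A. A \<noteq> {} \<longrightarrow> sel N p C A \<in> A)"

text \<open>One greedy step: state = (arrived players in order, coalition structure).
The option {} stands for forming a new singleton coalition.\<close>
definition greedy_step :: "policy \<Rightarrow> tiebreak \<Rightarrow> nat set \<Rightarrow> (nat set \<Rightarrow> real)
    \<Rightarrow> nat list \<times> nat set set \<Rightarrow> nat \<Rightarrow> nat list \<times> nat set set" where
  "greedy_step \<phi> sel N v st x =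
     (let p = fst st; C = snd st; p' = p @ [x]; opts = insert {} C;
          val = (\<lambda>S. \<phi> N v (filter (\<lambda>y. y \<in> insert x S) p') x);
          A = {S \<in> opts. \<forall>T \<in> opts. val T \<le> val S};
          S = sel N p' C A
      in (p', insert (insert x S) (C - {S})))"

definition greedy_structure :: "policy \<Rightarrow> tiebreak \<Rightarrow> nat set \<Rightarrow> (nat set \<Rightarrow> real)
    \<Rightarrow> nat list \<Rightarrow> nat set set" where
  "greedy_structure \<phi> sel N v \<pi> = snd (foldl (greedy_step \<phi> sel N v) ([], {}) \<pi>)"

definition SW :: "nat set set \<Rightarrow> (nat set \<Rightarrow> real) \<Rightarrow> real" where
  "SW C v = (\<Sum>S\<in>C. v S)"

definition opt_SW :: "nat set \<Rightarrow> (nat set \<Rightarrow> real) \<Rightarrow> real" where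
  "opt_SW N v = Max ((\<lambda>C. SW C v) ` {C. partition_on N C})"

definition competitive_ratio :: "real \<Rightarrow> real \<Rightarrow> policy \<Rightarrow> tiebreak \<Rightarrow> real" where
  "competitive_ratio mn mx \<phi> sel =
     Inf {SW (greedy_structure \<phi> sel N v \<pi>) v / opt_SW N v | N v \<pi>.
            finite N \<and> N \<noteq> {} \<and> in_V_ge3 mn mx N v \<and> arrival_order N \<pi>}"

end

theory Submission
  imports Defs
begin

lemma finite_argmax:
  fixes f :: "'b \<Rightarrow> real"
  assumes "finite X" "X \<noteq> {}"
  shows "\<exists>S\<in>X. \<forall>T\<in>X. f T \<le> f S"
proof -
  have "Max (f ` X) \<in> f ` X" using Max_in[of "f ` X"] assms by auto
  then obtain S where "S \<in> X" "f S = Max (f ` X)" by auto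
  then show ?thesis using assms by (metis Max_ge finite_imageI image_eqI)
qed

lemma step_inv:
  assumes vt: "valid_tiebreak sel"
    and fin: "finite (snd st)" and sub: "\<forall>S\<in>snd st. S \<subseteq> set (fst st)"
  shows "finite (snd (greedy_step \<phi> sel N v st x))
     \<and> (\<forall>S\<in>snd (greedy_step \<phi> sel N v st x). S \<subseteq> set (fst (greedy_step \<phi> sel N v st x)))
     \<and> fst (greedy_step \<phi> sel N v st x) = fst st @ [x]"
proof -
  define p where "p = fst st"
  define C where "C = snd st"
  define p' where "p' = p @ [x]"
  define opts where "opts = insert {} C"
  define val where "val = (\<lambda>S. \<phi> N v (filter (\<lambda>y. y \<in> insert x S) p') x)"
  define A where "A = {S \<in> opts. \<forall>T \<in> opts. val T \<le> val S}"
  define S where "S = sel N p' C A"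
  have g: "greedy_step \<phi> sel N v st x = (p', insert (insert x S) (C - {S}))"
    unfolding greedy_step_def p_def C_def p'_def opts_def val_def A_def S_def Let_def by simp
  have "finite opts" using fin by (simp add: opts_def C_def)
  then have "A \<noteq> {}" using finite_argmax[of opts val] by (auto simp: A_def opts_def)
  then have "S \<in> A" using vt by (simp add: valid_tiebreak_def S_def)
  then have "S \<in> opts" by (simp add: A_def)
  then have "S \<subseteq> set p" using sub by (auto simp: opts_def C_def p_def)
  then show ?thesis using fin sub by (auto simp: g p'_def C_def p_def)
qed

lemma fold_inv:
  assumes vt: "valid_tiebreak sel"
  shows "finite (snd st) \<and> (\<forall>S\<in>snd st. S \<subseteq> set (fst st)) \<Longrightarrow>
    finite (snd (foldl (greedy_step \<phi> sel N v) st xs))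
     \<and> (\<forall>S\<in>snd (foldl (greedy_step \<phi> sel N v) st xs). S \<subseteq> set (fst st) \<union> set xs)"
proof (induction xs arbitrary: st)
  case Nil
  then show ?case by simp
next
  case (Cons x xs)
  let ?st = "greedy_step \<phi> sel N v st x"
  have h: "finite (snd ?st) \<and> (\<forall>S\<in>snd ?st. S \<subseteq> set (fst ?st))" and f: "fst ?st = fst st @ [x]"
    using step_inv[OF vt, of st \<phi> N v x] Cons.prems by blast+
  have e: "foldl (greedy_step \<phi> sel N v) st (x # xs) = foldl (greedy_step \<phi> sel N v) ?st xs" by simp
  have "set (fst ?st) \<union> set xs = set (fst st) \<union> set (x # xs)" using f by auto
  then show ?case using Cons.IH[OF h] unfolding e by metis
qed

lemma SW_nonneg:
  assumes vt: "valid_tiebreak sel" and bm: "bounded_monotone mn mx N v" and ao: "arrival_order N \<pi>"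
  shows "SW (greedy_structure \<phi> sel N v \<pi>) v \<ge> 0"
proof -
  have "\<forall>S\<in>greedy_structure \<phi> sel N v \<pi>. S \<subseteq> N"
    using fold_inv[OF vt, of "([],{})" \<phi> N v \<pi>] ao
    by (simp add: greedy_structure_def arrival_order_def)
  then show ?thesis using bm unfolding SW_def bounded_monotone_def
    by (intro sum_nonneg) auto
qed

lemma opt_ge:
  assumes "finite N" "N \<noteq> {}" "partition_on N C"
  shows "SW C v \<le> opt_SW N v"
proof -
  have "{C. partition_on N C} \<subseteq> Pow (Pow N)"
    by (auto simp: partition_on_def)
  then have "finite {C. partition_on N C}" using assms(1) by (meson finite_Pow_iff rev_finite_subset)
  then show ?thesis unfolding opt_SW_def using assms(3) by (intro Max_ge) auto
qed

lemma opt_nonneg: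
  assumes "finite N" "N \<noteq> {}" "bounded_monotone mn mx N v"
  shows "opt_SW N v \<ge> 0"
proof -
  have "partition_on N {N}" using assms(2) by (simp add: partition_on_def disjoint_def)
  moreover have "SW {N} v \<ge> 0" using assms(3) by (simp add: SW_def bounded_monotone_def)
  ultimately show ?thesis using opt_ge[OF assms(1,2), of "{N}" v] by linarith
qed


lemma step_alone:
  assumes vt: "valid_tiebreak sel" and fin: "finite C"
    and lt: "\<forall>T\<in>C. \<phi> N v (filter (\<lambda>y. y \<in> insert x T) (p @ [x])) x
                 < \<phi> N v (filter (\<lambda>y. y \<in> insert x {}) (p @ [x])) x"
  shows "greedy_step \<phi> sel N v (p, C) x = (p @ [x], insert {x} (C - {{}}))"
proof -
  define val where "val = (\<lambda>S. \<phi> N v (filter (\<lambda>y. y \<in> insert x S) (p @ [x])) x)"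
  define A where "A = {S \<in> insert {} C. \<forall>T \<in> insert {} C. val T \<le> val S}"
  have "A = {{}}"
  proof
    show "{{}} \<subseteq> A" using lt by (force simp: A_def val_def)
    show "A \<subseteq> {{}}"
    proof
      fix S assume "S \<in> A"
      then have "S \<in> insert {} C" "val {} \<le> val S" by (auto simp: A_def)
      then show "S \<in> {{}}" using lt by (auto simp: val_def)
    qed
  qed
  have "sel N (p @ [x]) C A \<in> A" using vt \<open>A = {{}}\<close> unfolding valid_tiebreak_def by blast
  then have "sel N (p @ [x]) C A = {}" using \<open>A = {{}}\<close> by simp
  then show ?thesis unfolding greedy_step_def Let_def
    using \<open>A = {{}}\<close> by (simp add: A_def val_def)
qed

definition v0 :: "real \<Rightarrow> real \<Rightarrow> nat set \<Rightarrow> real" where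
  "v0 mn mx = (\<lambda>S. if S = {} then 0 else if S = {0,1,2} then mx else mn)"

lemma v0_in:
  assumes "0 < mn" "3 * mn \<le> mx"
  shows "in_V_ge3 mn mx {0,1,2} (v0 mn mx)"
proof -
  define d where "d = nat \<lfloor>mx / mn\<rfloor>"
  have q: "3 \<le> mx / mn" using assms by (simp add: field_simps)
  then have "3 \<le> \<lfloor>mx / mn\<rfloor>" by linarith
  then have d3: "d \<ge> 3" unfolding d_def by linarith
  have dr: "real d = of_int \<lfloor>mx / mn\<rfloor>" using \<open>3 \<le> \<lfloor>mx / mn\<rfloor>\<close> by (simp add: d_def)
  have "real d \<le> mx / mn" "mx / mn < real d + 1" using dr by linarith+
  then have "real d * mn \<le> mx" "mx < (real d + 1) * mn" using assms(1)
    by (simp_all add: field_simps)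
  moreover have "bounded_monotone mn mx {0,1,2} (v0 mn mx)"
    unfolding bounded_monotone_def v0_def using assms by auto
  ultimately show ?thesis unfolding in_V_ge3_def in_V_def using d3 by blast
qed

theorem theorem2:
  fixes mn mx :: real and \<phi> :: policy and sel :: tiebreak
  assumes "0 < mn" and "mn \<le> mx" and "3 * mn \<le> mx"
    and "non_wasteful mn mx \<phi>" and "irrevocable mn mx \<phi>"
    and "valid_tiebreak sel"
  shows "competitive_ratio mn mx \<phi> sel \<le> 3 * mn / mx"
proof -
  define N :: "nat set" where "N = {0,1,2}"
  define v where "v = v0 mn mx"
  have vin: "in_V_ge3 mn mx N v" using v0_in[OF assms(1,3)] by (simp add: N_def v_def)
  have finN: "finite N" by (simp add: N_def)
  have nw: "\<And>\<sigma>. distinct \<sigma> \<Longrightarrow> set \<sigma> \<subseteq> N \<Longrightarrow> (\<Sum>i\<in>set \<sigma>. \<phi> N v \<sigma> i) = v (set \<sigma>)"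
    using assms(4) vin finN unfolding non_wasteful_def by blast
  have irr: "\<And>\<sigma> \<rho> i. distinct (\<sigma> @ \<rho>) \<Longrightarrow> set (\<sigma> @ \<rho>) \<subseteq> N \<Longrightarrow> i \<in> set \<sigma>
      \<Longrightarrow> \<phi> N v \<sigma> i \<le> \<phi> N v (\<sigma> @ \<rho>) i"
    using assms(5) vin finN unfolding irrevocable_def by blast
  have single: "\<phi> N v [x] x = mn" if "x \<in> N" for x
  proof -
    have "(\<Sum>i\<in>set [x]. \<phi> N v [x] i) = v (set [x])"
      using nw[of "[x]"] that by simp
    then show ?thesis using that by (auto simp: v_def v0_def N_def)
  qed
  have pair: "\<phi> N v [y, x] x < \<phi> N v [x] x" if "x \<in> N" "y \<in> N" "x \<noteq> y" for x y
  proof -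
    have "\<phi> N v [y] y \<le> \<phi> N v ([y] @ [x]) y"
      using irr[of "[y]" "[x]" y] that by simp
    moreover have "\<phi> N v [y,x] y + \<phi> N v [y,x] x = v {y,x}"
      using nw[of "[y,x]"] that by simp
    moreover have "v {y,x} = mn"
    proof -
      have "card {y,x} = 2" using that by simp
      moreover have "card {0,1,2::nat} = 3" by simp
      ultimately have "{y,x} \<noteq> {0,1,2}"
        by (metis numeral_eq_iff semiring_norm(89))
      then show ?thesis by (simp add: v_def v0_def)
    qed
    ultimately show ?thesis using single[OF that(1)] single[OF that(2)] assms(1) by simp
  qed
  have s1: "greedy_step \<phi> sel N v ([], {}) 0 = ([0], {{0}})"
    using step_alone[OF assms(6), of "{}" \<phi> N v 0 "[]"] by simp
  have s2: "greedy_step \<phi> sel N v ([0], {{0}}) 1 = ([0,1], {{1},{0}})"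
    using step_alone[OF assms(6), of "{{0}}" \<phi> N v 1 "[0]"] pair[of 1 0]
    by (simp add: N_def)
  have s3: "greedy_step \<phi> sel N v ([0,1], {{1},{0}}) 2 = ([0,1,2], {{2},{1},{0}})"
    using step_alone[OF assms(6), of "{{1},{0}}" \<phi> N v 2 "[0,1]"] pair[of 2 0] pair[of 2 1]
    by (simp add: N_def)
  have gs: "greedy_structure \<phi> sel N v [0,1,2] = {{2},{1},{0}}"
    unfolding greedy_structure_def using s1 s2 s3 by simp
  have sw: "SW {{2},{1},{0}} v = 3 * mn"
    by (simp add: SW_def v_def v0_def)
  have pN: "partition_on N {N}" by (simp add: partition_on_def disjoint_def N_def)
  have "SW {N} v = mx" by (simp add: SW_def v_def v0_def N_def)
  then have opt: "mx \<le> opt_SW N v" using opt_ge[OF finN _ pN, of v] by (simp add: N_def)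
  have ao: "arrival_order N [0,1,2]" by (simp add: arrival_order_def N_def)
  define X where "X = {SW (greedy_structure \<phi> sel N v \<pi>) v / opt_SW N v | N v \<pi>.
            finite N \<and> N \<noteq> {} \<and> in_V_ge3 mn mx N v \<and> arrival_order N \<pi>}"
  have mem: "3 * mn / opt_SW N v \<in> X"
    unfolding X_def using finN vin ao gs sw
    by (intro CollectI exI[of _ N] exI[of _ v] exI[of _ "[0,1,2]"]) (auto simp: N_def)
  have bdd: "bdd_below X"
  proof (rule bdd_belowI)
    fix r assume "r \<in> X"
    then obtain N' v' \<pi> where r: "r = SW (greedy_structure \<phi> sel N' v' \<pi>) v' / opt_SW N' v'"
      and h: "finite N'" "N' \<noteq> {}" "in_V_ge3 mn mx N' v'" "arrival_order N' \<pi>"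
      unfolding X_def by blast
    from h(3) have bm: "bounded_monotone mn mx N' v'" by (auto simp: in_V_ge3_def in_V_def)
    show "0 \<le> r" unfolding r
      using SW_nonneg[OF assms(6) bm h(4)] opt_nonneg[OF h(1,2) bm] by simp
  qed
  have "competitive_ratio mn mx \<phi> sel \<le> 3 * mn / opt_SW N v"
    unfolding competitive_ratio_def X_def[symmetric] by (rule cInf_lower[OF mem bdd])
  also have "\<dots> \<le> 3 * mn / mx"
    using opt assms by (intro divide_left_mono) auto
  finally show ?thesis .
qed

end
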